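(* Let $H$ be a Hopf algebra over a field, $A$ a unital associative algebra and $\cdot:H\otimes A\to A$ a partial action of $H$ on $A$. For each group-like element $h\in G(H)$ and each $a\in A$: (i) $(h\cdot1_A)a(h\cdot1_A)=(h\cdot1_A)a$; (ii) if the restriction of $\cdot$ to $\Bbbk G(H)\otimes A$ is a symmetric partial action, then $(h\cdot1_A)a=a(h\cdot1_A)$; (iii) if $h\cdot1_A=0$, then $(h^i\cdot1_A)(h^{i+1}\cdot1_A)=0$ for all $i\in\mathbb{Z}$.
   Context: $G(H)=\{g\ne0:\Delta(g)=g\otimes g\}$ is the group of group-like elements and $\Bbbk G(H)$ its span. A partial action of $H$ on $A$ is a linear map $\cdot:H\otimes A\to A$, $h\otimes a\mapsto h\cdot a$, with $1_H\cdot a=a$, $h\cdot(ab)=(h_1\cdot a)(h_2\cdot b)$, $h\cdot(k\cdot a)=(h_1\cdot1_A)(h_2k\cdot a)$ for all $h,k\in H$, $a,b\in A$ (Sweedler notation $\Delta(h)=h_1\otimes h_2$); it is symmetric if moreover $h\cdot(k\cdot a)=(h_1k\cdot a)(h_2\cdot1_A)$. *)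

theory Defs
  imports Main "HOL.Vector_Spaces"
begin

text \<open>
A k-algebra (unital, associative) is a type
of sort {ring, monoid_mult} (no requirement 0 \<noteq> 1) with a k-vector space structure
such that multiplication is k-bilinear.

Tensors in H \<otimes> H (resp. H \<otimes> H \<otimes> H) are represented by finite lists of pairs (triples)
of elements (the list [(x1,y1),...] stands for the sum of the xi \<otimes> yi).  Two such lists
represent the same tensor iff every k-bilinear (trilinear) form takes the same value on
them; over a field bilinear forms separate the points of H \<otimes> H, so this is exactly equality
in the tensor product.  The comultiplication \<Delta> maps h to a representative of \<Delta>(h), and
Sweedler sums h1 \<otimes> h2 are sums over that list.
\<close>

definition algebra_over :: "('k::field \<Rightarrow> 'h::{ring,monoid_mult} \<Rightarrow> 'h) \<Rightarrow> bool" where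
  "algebra_over sm \<longleftrightarrow> vector_space sm \<and>
     (\<forall>c x y. sm c (x * y) = sm c x * y) \<and> (\<forall>c x y. sm c (x * y) = x * sm c y)"

definition bilinear_form :: "('k::field \<Rightarrow> 'h::ab_group_add \<Rightarrow> 'h) \<Rightarrow> ('h \<Rightarrow> 'h \<Rightarrow> 'k) \<Rightarrow> bool" where
  "bilinear_form sm f \<longleftrightarrow>
     (\<forall>x x' y. f (x + x') y = f x y + f x' y) \<and> (\<forall>x y y'. f x (y + y') = f x y + f x y') \<and>
     (\<forall>c x y. f (sm c x) y = c * f x y) \<and> (\<forall>c x y. f x (sm c y) = c * f x y)"

definition trilinear_form :: "('k::field \<Rightarrow> 'h::ab_group_add \<Rightarrow> 'h) \<Rightarrow> ('h \<Rightarrow> 'h \<Rightarrow> 'h \<Rightarrow> 'k) \<Rightarrow> bool" where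
  "trilinear_form sm f \<longleftrightarrow>
     (\<forall>x x' y z. f (x + x') y z = f x y z + f x' y z) \<and>
     (\<forall>x y y' z. f x (y + y') z = f x y z + f x y' z) \<and>
     (\<forall>x y z z'. f x y (z + z') = f x y z + f x y z') \<and>
     (\<forall>c x y z. f (sm c x) y z = c * f x y z) \<and>
     (\<forall>c x y z. f x (sm c y) z = c * f x y z) \<and>
     (\<forall>c x y z. f x y (sm c z) = c * f x y z)"

definition tens2_eq :: "('k::field \<Rightarrow> 'h::ab_group_add \<Rightarrow> 'h) \<Rightarrow> ('h \<times> 'h) list \<Rightarrow> ('h \<times> 'h) list \<Rightarrow> bool" where
  "tens2_eq sm L M \<longleftrightarrow> (\<forall>f. bilinear_form sm f \<longrightarrow>
      (\<Sum>(x, y)\<leftarrow>L. f x y) = (\<Sum>(x, y)\<leftarrow>M. f x y))"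

definition tens3_eq :: "('k::field \<Rightarrow> 'h::ab_group_add \<Rightarrow> 'h) \<Rightarrow> ('h \<times> 'h \<times> 'h) list \<Rightarrow> ('h \<times> 'h \<times> 'h) list \<Rightarrow> bool" where
  "tens3_eq sm L M \<longleftrightarrow> (\<forall>f. trilinear_form sm f \<longrightarrow>
      (\<Sum>(x, y, z)\<leftarrow>L. f x y z) = (\<Sum>(x, y, z)\<leftarrow>M. f x y z))"

definition hopf_algebra ::
  "('k::field \<Rightarrow> 'h::{ring,monoid_mult} \<Rightarrow> 'h) \<Rightarrow> ('h \<Rightarrow> ('h \<times> 'h) list) \<Rightarrow> ('h \<Rightarrow> 'k) \<Rightarrow> ('h \<Rightarrow> 'h) \<Rightarrow> bool" where
  "hopf_algebra sm \<Delta> \<epsilon> S \<longleftrightarrow>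
     algebra_over sm \<and>
     \<comment> \<open>\<Delta> is k-linear\<close>
     (\<forall>h k. tens2_eq sm (\<Delta> (h + k)) (\<Delta> h @ \<Delta> k)) \<and>
     (\<forall>c h. tens2_eq sm (\<Delta> (sm c h)) (map (\<lambda>(x, y). (sm c x, y)) (\<Delta> h))) \<and>
     \<comment> \<open>\<epsilon> is k-linear\<close>
     (\<forall>h k. \<epsilon> (h + k) = \<epsilon> h + \<epsilon> k) \<and> (\<forall>c h. \<epsilon> (sm c h) = c * \<epsilon> h) \<and>
     \<comment> \<open>coassociativity\<close>
     (\<forall>h. tens3_eq sm (concat (map (\<lambda>(x, y). map (\<lambda>(u, v). (u, v, y)) (\<Delta> x)) (\<Delta> h)))
                      (concat (map (\<lambda>(x, y). map (\<lambda>(u, v). (x, u, v)) (\<Delta> y)) (\<Delta> h)))) \<and>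
     \<comment> \<open>counit\<close>
     (\<forall>h. (\<Sum>(x, y)\<leftarrow>\<Delta> h. sm (\<epsilon> x) y) = h) \<and>
     (\<forall>h. (\<Sum>(x, y)\<leftarrow>\<Delta> h. sm (\<epsilon> y) x) = h) \<and>
     \<comment> \<open>\<Delta> and \<epsilon> are algebra maps\<close>
     (\<forall>h k. tens2_eq sm (\<Delta> (h * k))
        (concat (map (\<lambda>(x, y). map (\<lambda>(u, v). (x * u, y * v)) (\<Delta> k)) (\<Delta> h)))) \<and>
     tens2_eq sm (\<Delta> 1) [(1, 1)] \<and>
     (\<forall>h k. \<epsilon> (h * k) = \<epsilon> h * \<epsilon> k) \<and> \<epsilon> 1 = 1 \<and>
     \<comment> \<open>antipode\<close>
     (\<forall>h k. S (h + k) = S h + S k) \<and> (\<forall>c h. S (sm c h) = sm c (S h)) \<and>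
     (\<forall>h. (\<Sum>(x, y)\<leftarrow>\<Delta> h. S x * y) = sm (\<epsilon> h) 1) \<and>
     (\<forall>h. (\<Sum>(x, y)\<leftarrow>\<Delta> h. x * S y) = sm (\<epsilon> h) 1)"

definition grouplikes :: "('k::field \<Rightarrow> 'h::{ring,monoid_mult} \<Rightarrow> 'h) \<Rightarrow> ('h \<Rightarrow> ('h \<times> 'h) list) \<Rightarrow> 'h set" where
  "grouplikes sm \<Delta> = {g. g \<noteq> 0 \<and> tens2_eq sm (\<Delta> g) [(g, g)]}"

text \<open>Linear map H \<otimes> A \<rightarrow> A, i.e. a k-bilinear map H \<times> A \<rightarrow> A.\<close>
definition bilinear_action ::
  "('k::field \<Rightarrow> 'h::ab_group_add \<Rightarrow> 'h) \<Rightarrow> ('k \<Rightarrow> 'a::ab_group_add \<Rightarrow> 'a) \<Rightarrow> ('h \<Rightarrow> 'a \<Rightarrow> 'a) \<Rightarrow> bool" where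
  "bilinear_action smH smA act \<longleftrightarrow>
     (\<forall>h h' a. act (h + h') a = act h a + act h' a) \<and>
     (\<forall>h a a'. act h (a + a') = act h a + act h a') \<and>
     (\<forall>c h a. act (smH c h) a = smA c (act h a)) \<and>
     (\<forall>c h a. act h (smA c a) = smA c (act h a))"

definition partial_action ::
  "('k::field \<Rightarrow> 'h::{ring,monoid_mult} \<Rightarrow> 'h) \<Rightarrow> ('h \<Rightarrow> ('h \<times> 'h) list) \<Rightarrow>
   ('k \<Rightarrow> 'a::{ring,monoid_mult} \<Rightarrow> 'a) \<Rightarrow> ('h \<Rightarrow> 'a \<Rightarrow> 'a) \<Rightarrow> bool" where
  "partial_action smH \<Delta> smA act \<longleftrightarrow>
     bilinear_action smH smA act \<and>
     (\<forall>a. act 1 a = a) \<and>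
     (\<forall>h a b. act h (a * b) = (\<Sum>(x, y)\<leftarrow>\<Delta> h. act x a * act y b)) \<and>
     (\<forall>h k a. act h (act k a) = (\<Sum>(x, y)\<leftarrow>\<Delta> h. act x 1 * act (y * k) a))"

text \<open>The restriction of act to kG(H) \<otimes> A is a symmetric partial action (of the Hopf
  subalgebra kG(H)): all partial action axioms plus symmetry, for h, k in the span of G(H).\<close>
definition symmetric_on_span_grouplikes ::
  "('k::field \<Rightarrow> 'h::{ring,monoid_mult} \<Rightarrow> 'h) \<Rightarrow> ('h \<Rightarrow> ('h \<times> 'h) list) \<Rightarrow>
   ('k \<Rightarrow> 'a::{ring,monoid_mult} \<Rightarrow> 'a) \<Rightarrow> ('h \<Rightarrow> 'a \<Rightarrow> 'a) \<Rightarrow> bool" where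
  "symmetric_on_span_grouplikes smH \<Delta> smA act \<longleftrightarrow>
     (let kG = module.span smH (grouplikes smH \<Delta>) in
       bilinear_action smH smA act \<and>
       (\<forall>a. act 1 a = a) \<and>
       (\<forall>h\<in>kG. \<forall>a b. act h (a * b) = (\<Sum>(x, y)\<leftarrow>\<Delta> h. act x a * act y b)) \<and>
       (\<forall>h\<in>kG. \<forall>k\<in>kG. \<forall>a. act h (act k a) = (\<Sum>(x, y)\<leftarrow>\<Delta> h. act x 1 * act (y * k) a)) \<and>
       (\<forall>h\<in>kG. \<forall>k\<in>kG. \<forall>a. act h (act k a) = (\<Sum>(x, y)\<leftarrow>\<Delta> h. act (x * k) a * act y 1)))"

definition int_pow :: "'h::monoid_mult \<Rightarrow> int \<Rightarrow> 'h" where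
  "int_pow h i = (if 0 \<le> i then h ^ nat i else (THE g. h * g = 1 \<and> g * h = 1) ^ nat (- i))"

end

theory Submission
  imports Defs
begin


lemma sep:
  fixes sm :: "'k::field \<Rightarrow> 'b::ab_group_add \<Rightarrow> 'b"
  assumes V: "vector_space sm"
    and P: "\<And>\<phi>::'b\<Rightarrow>'k. (\<forall>x y. \<phi> (x + y) = \<phi> x + \<phi> y) \<Longrightarrow> (\<forall>c x. \<phi> (sm c x) = c * \<phi> x) \<Longrightarrow> \<phi> u = \<phi> v"
  shows "u = v"
proof (rule ccontr)
  interpret V: vector_space sm by (rule V)
  assume "u \<noteq> v"
  define d where "d = u - v"
  have d0: "d \<noteq> 0" using \<open>u \<noteq> v\<close> by (simp add: d_def)
  have ind: "V.independent {d}" using d0 by simp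
  define B where "B = V.extend_basis {d}"
  have iB: "V.independent B" unfolding B_def using V.independent_extend_basis[OF ind] .
  have sB: "V.span B = UNIV" unfolding B_def using V.span_extend_basis[OF ind] .
  have dB: "d \<in> B" unfolding B_def using V.extend_basis_superset[OF ind] by auto
  define \<phi> where "\<phi> w = V.representation B w d" for w
  have add: "\<forall>x y. \<phi> (x + y) = \<phi> x + \<phi> y"
    unfolding \<phi>_def using V.representation_add[OF iB] sB by simp
  have sc: "\<forall>c x. \<phi> (sm c x) = c * \<phi> x"
    unfolding \<phi>_def using V.representation_scale[OF iB] sB by simp
  have "\<phi> u = \<phi> v" using P[OF add sc] .
  moreover have "\<phi> u = \<phi> d + \<phi> v" using add unfolding d_def by (metis diff_add_cancel)
  moreover have "\<phi> d = 1" unfolding \<phi>_def using V.representation_basis[OF iB dB] by simp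
  ultimately show False by simp
qed


lemma sum_list_lin:
  fixes \<phi> :: "'b::ab_group_add \<Rightarrow> 'k::field"
  assumes add: "\<forall>x y. \<phi> (x + y) = \<phi> x + \<phi> y"
  shows "\<phi> (\<Sum>(x, y)\<leftarrow>L. F x y) = (\<Sum>(x, y)\<leftarrow>L. \<phi> (F x y))"
proof -
  have z: "\<phi> 0 = 0" using add by (metis add_cancel_right_left add_0)
  show ?thesis by (induction L) (auto simp: z add)
qed

lemma collapse_gen:
  fixes smH :: "'k::field \<Rightarrow> 'h::ab_group_add \<Rightarrow> 'h" and smB :: "'k \<Rightarrow> 'b::ab_group_add \<Rightarrow> 'b"
    and F :: "'h \<Rightarrow> 'h \<Rightarrow> 'b"
  assumes VB: "vector_space smB" and T: "tens2_eq smH L [(g,g)]"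
    and F1: "\<forall>x x' y. F (x+x') y = F x y + F x' y" and F2: "\<forall>x y y'. F x (y+y') = F x y + F x y'"
    and F3: "\<forall>c x y. F (smH c x) y = smB c (F x y)" and F4: "\<forall>c x y. F x (smH c y) = smB c (F x y)"
  shows "(\<Sum>(x,y)\<leftarrow>L. F x y) = F g g"
proof (rule sep[OF VB])
  fix \<phi> :: "'b \<Rightarrow> 'k"
  assume add: "\<forall>x y. \<phi> (x + y) = \<phi> x + \<phi> y" and sc: "\<forall>c x. \<phi> (smB c x) = c * \<phi> x"
  have bf: "bilinear_form smH (\<lambda>x y. \<phi> (F x y))"
    unfolding bilinear_form_def using F1 F2 F3 F4 add sc by simp
  have "(\<Sum>(x, y)\<leftarrow>L. \<phi> (F x y)) = (\<Sum>(x, y)\<leftarrow>[(g,g)]. \<phi> (F x y))"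
    using T bf unfolding tens2_eq_def by blast
  then show "\<phi> (\<Sum>(x,y)\<leftarrow>L. F x y) = \<phi> (F g g)"
    using sum_list_lin[OF add, of F L] by simp
qed

definition hl :: "('k::field \<Rightarrow> 'h::ab_group_add \<Rightarrow> 'h) \<Rightarrow> ('k \<Rightarrow> 'a::ab_group_add \<Rightarrow> 'a) \<Rightarrow> ('h \<Rightarrow> 'a) \<Rightarrow> bool" where
  "hl smH smA P \<longleftrightarrow> (\<forall>x y. P (x + y) = P x + P y) \<and> (\<forall>c x. P (smH c x) = smA c (P x))"

lemma collapse_prod:
  fixes smH :: "'k::field \<Rightarrow> 'h::ab_group_add \<Rightarrow> 'h" and smA :: "'k \<Rightarrow> 'a::{ring,monoid_mult} \<Rightarrow> 'a"
  assumes A: "algebra_over smA" and T: "tens2_eq smH L [(g,g)]"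
    and P: "hl smH smA P" and Q: "hl smH smA Q"
  shows "(\<Sum>(x,y)\<leftarrow>L. P x * Q y) = P g * Q g"
proof (rule collapse_gen[OF _ T])
  show V: "vector_space smA" using A unfolding algebra_over_def by simp
  have m1: "\<And>c x y. smA c (x * y) = smA c x * y" and m2: "\<And>c x y. smA c (x * y) = x * smA c y"
    using A unfolding algebra_over_def by auto
  show "\<forall>x x' y. P (x + x') * Q y = P x * Q y + P x' * Q y" using P unfolding hl_def by (simp add: distrib_right)
  show "\<forall>x y y'. P x * Q (y + y') = P x * Q y + P x * Q y'" using Q unfolding hl_def by (simp add: distrib_left)
  show "\<forall>c x y. P (smH c x) * Q y = smA c (P x * Q y)" using P m1 unfolding hl_def by simp
  show "\<forall>c x y. P x * Q (smH c y) = smA c (P x * Q y)" using Q m2 unfolding hl_def by simp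
qed

lemma sum_concat:
  "(\<Sum>(x, y)\<leftarrow>concat (map (\<lambda>(x, y). map (\<lambda>(u, v). (x * u, y * v)) M) L). f x y)
   = (\<Sum>(x, y)\<leftarrow>L. (\<Sum>(u, v)\<leftarrow>M. f (x * u) (y * v)))"
  by (induction L) (auto simp: case_prod_beta comp_def)

lemma bf_shift:
  fixes smH :: "'k::field \<Rightarrow> 'h::{ring,monoid_mult} \<Rightarrow> 'h"
  assumes AH: "algebra_over smH" and bf: "bilinear_form smH f"
  shows "bilinear_form smH (\<lambda>u v. f (a * u * c) (b * v * d))"
proof -
  have m1: "\<And>c x y. smH c (x * y) = smH c x * y" and m2: "\<And>c x y. smH c (x * y) = x * smH c y"
    using AH unfolding algebra_over_def by auto
  have "p * smH k u * q = smH k (p * u * q)" for k u p q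
    by (metis m1 m2)
  then show ?thesis using bf unfolding bilinear_form_def
    by (simp add: distrib_left distrib_right)
qed


lemma GL_mult_sum:
  fixes smH :: "'k::field \<Rightarrow> 'h::{ring,monoid_mult} \<Rightarrow> 'h"
  assumes H: "hopf_algebra smH \<Delta> \<epsilon> S" and Tk: "tens2_eq smH (\<Delta> k) [(k,k)]"
    and bf: "bilinear_form smH f"
  shows "(\<Sum>(x,y)\<leftarrow>\<Delta> (g*k). f x y) = (\<Sum>(x,y)\<leftarrow>\<Delta> g. f (x*k) (y*k))"
proof -
  have AH: "algebra_over smH" using H unfolding hopf_algebra_def by simp
  have M: "tens2_eq smH (\<Delta> (g * k))
        (concat (map (\<lambda>(x, y). map (\<lambda>(u, v). (x * u, y * v)) (\<Delta> k)) (\<Delta> g)))"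
    using H unfolding hopf_algebra_def by blast
  have "(\<Sum>(x,y)\<leftarrow>\<Delta> (g*k). f x y) =
     (\<Sum>(x, y)\<leftarrow>concat (map (\<lambda>(x, y). map (\<lambda>(u, v). (x * u, y * v)) (\<Delta> k)) (\<Delta> g)). f x y)"
    using M bf unfolding tens2_eq_def by blast
  also have "\<dots> = (\<Sum>(x, y)\<leftarrow>\<Delta> g. (\<Sum>(u, v)\<leftarrow>\<Delta> k. f (x * u) (y * v)))"
    by (rule sum_concat)
  also have "\<dots> = (\<Sum>(x,y)\<leftarrow>\<Delta> g. f (x*k) (y*k))"
  proof -
    have "(\<Sum>(u, v)\<leftarrow>\<Delta> k. f (x * u) (y * v)) = f (x*k) (y*k)" for x y
    proof -
      have "bilinear_form smH (\<lambda>u v. f (x * u * 1) (y * v * 1))" by (rule bf_shift[OF AH bf])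
      then have "(\<Sum>(u, v)\<leftarrow>\<Delta> k. f (x * u * 1) (y * v * 1)) = (\<Sum>(u, v)\<leftarrow>[(k,k)]. f (x * u * 1) (y * v * 1))"
        using Tk unfolding tens2_eq_def by blast
      then show ?thesis by simp
    qed
    then show ?thesis by (simp add: case_prod_beta)
  qed
  finally show ?thesis .
qed

lemma GL_mult:
  fixes smH :: "'k::field \<Rightarrow> 'h::{ring,monoid_mult} \<Rightarrow> 'h"
  assumes H: "hopf_algebra smH \<Delta> \<epsilon> S" and Tg: "tens2_eq smH (\<Delta> g) [(g,g)]"
    and Tk: "tens2_eq smH (\<Delta> k) [(k,k)]"
  shows "tens2_eq smH (\<Delta> (g*k)) [(g*k,g*k)]"
  unfolding tens2_eq_def
proof (intro allI impI)
  fix f assume bf: "bilinear_form smH f"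
  have AH: "algebra_over smH" using H unfolding hopf_algebra_def by simp
  have "bilinear_form smH (\<lambda>u v. f (1 * u * k) (1 * v * k))" by (rule bf_shift[OF AH bf])
  then have "(\<Sum>(x,y)\<leftarrow>\<Delta> g. f (1 * x * k) (1 * y * k)) = (\<Sum>(x,y)\<leftarrow>[(g,g)]. f (1 * x * k) (1 * y * k))"
    using Tg unfolding tens2_eq_def by blast
  then show "(\<Sum>(x,y)\<leftarrow>\<Delta> (g*k). f x y) = (\<Sum>(x,y)\<leftarrow>[(g*k,g*k)]. f x y)"
    using GL_mult_sum[OF H Tk bf, of g] by simp
qed

lemma GL_pow:
  fixes smH :: "'k::field \<Rightarrow> 'h::{ring,monoid_mult} \<Rightarrow> 'h"
  assumes H: "hopf_algebra smH \<Delta> \<epsilon> S" and Tg: "tens2_eq smH (\<Delta> g) [(g,g)]"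
  shows "tens2_eq smH (\<Delta> (g ^ n)) [(g ^ n, g ^ n)]"
proof (induction n)
  case 0
  then show ?case using H unfolding hopf_algebra_def by simp
next
  case (Suc n)
  then show ?case using GL_mult[OF H Suc Tg] by (metis power_Suc2)
qed

lemma GL_inv:
  fixes smH :: "'k::field \<Rightarrow> 'h::{ring,monoid_mult} \<Rightarrow> 'h"
  assumes H: "hopf_algebra smH \<Delta> \<epsilon> S" and Th: "tens2_eq smH (\<Delta> h) [(h,h)]"
    and sh: "s * h = 1" and hs: "h * s = 1"
  shows "tens2_eq smH (\<Delta> s) [(s,s)]"
  unfolding tens2_eq_def
proof (intro allI impI)
  fix f assume bf: "bilinear_form smH f"
  have AH: "algebra_over smH" using H unfolding hopf_algebra_def by simp
  have D1: "tens2_eq smH (\<Delta> 1) [(1, 1)]" using H unfolding hopf_algebra_def by simp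
  have bf': "bilinear_form smH (\<lambda>u v. f (1 * u * s) (1 * v * s))" by (rule bf_shift[OF AH bf])
  have "(\<Sum>(x,y)\<leftarrow>\<Delta> (s*h). f (1 * x * s) (1 * y * s)) = (\<Sum>(x,y)\<leftarrow>\<Delta> s. f (1 * (x*h) * s) (1 * (y*h) * s))"
    using GL_mult_sum[OF H Th bf', of s] by simp
  also have "\<dots> = (\<Sum>(x,y)\<leftarrow>\<Delta> s. f x y)" by (simp add: mult.assoc hs)
  finally have 1: "(\<Sum>(x,y)\<leftarrow>\<Delta> s. f x y) = (\<Sum>(x,y)\<leftarrow>\<Delta> 1. f (1 * x * s) (1 * y * s))"
    using sh by simp
  have "(\<Sum>(x,y)\<leftarrow>\<Delta> 1. f (1 * x * s) (1 * y * s)) = (\<Sum>(x,y)\<leftarrow>[(1,1)]. f (1 * x * s) (1 * y * s))"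
    using D1 bf' unfolding tens2_eq_def by blast
  then show "(\<Sum>(x,y)\<leftarrow>\<Delta> s. f x y) = (\<Sum>(x,y)\<leftarrow>[(s,s)]. f x y)" using 1 by simp
qed

theorem lemma3p1:
  fixes smH :: "'k::field \<Rightarrow> 'h::{ring,monoid_mult} \<Rightarrow> 'h"
    and \<Delta> :: "'h \<Rightarrow> ('h \<times> 'h) list" and \<epsilon> :: "'h \<Rightarrow> 'k" and S :: "'h \<Rightarrow> 'h"
    and smA :: "'k \<Rightarrow> 'a::{ring,monoid_mult} \<Rightarrow> 'a"
    and act :: "'h \<Rightarrow> 'a \<Rightarrow> 'a"
  assumes H: "hopf_algebra smH \<Delta> \<epsilon> S"
    and A: "algebra_over smA"
    and pa: "partial_action smH \<Delta> smA act"
    and h: "h \<in> grouplikes smH \<Delta>"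
  shows "act h 1 * a * act h 1 = act h 1 * a \<and>
         (symmetric_on_span_grouplikes smH \<Delta> smA act \<longrightarrow> act h 1 * a = a * act h 1) \<and>
         (act h 1 = 0 \<longrightarrow> (\<forall>i::int. act (int_pow h i) 1 * act (int_pow h (i + 1)) 1 = 0))"
proof -
  have AH: "algebra_over smH" using H unfolding hopf_algebra_def by simp
  have VH: "vector_space smH" using AH unfolding algebra_over_def by simp
  interpret VH: vector_space smH by (rule VH)
  have mH1: "\<And>c x y. smH c (x * y) = smH c x * y" and mH2: "\<And>c x y. smH c (x * y) = x * smH c y"
    using AH unfolding algebra_over_def by auto
  have h0: "h \<noteq> 0" and Th: "tens2_eq smH (\<Delta> h) [(h,h)]" using h unfolding grouplikes_def by auto
  have epsadd: "\<forall>h k. \<epsilon> (h + k) = \<epsilon> h + \<epsilon> k" and epssc: "\<forall>c h. \<epsilon> (smH c h) = c * \<epsilon> h"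
    using H unfolding hopf_algebra_def by auto
  have cou: "(\<Sum>(x, y)\<leftarrow>\<Delta> h. smH (\<epsilon> x) y) = h" using H unfolding hopf_algebra_def by blast
  have Sadd: "\<forall>h k. S (h + k) = S h + S k" and Ssc: "\<forall>c h. S (smH c h) = smH c (S h)"
    using H unfolding hopf_algebra_def by auto
  have ant1: "(\<Sum>(x, y)\<leftarrow>\<Delta> h. S x * y) = smH (\<epsilon> h) 1"
   and ant2: "(\<Sum>(x, y)\<leftarrow>\<Delta> h. x * S y) = smH (\<epsilon> h) 1"
    using H unfolding hopf_algebra_def by blast+
  have "(\<Sum>(x, y)\<leftarrow>\<Delta> h. smH (\<epsilon> x) y) = smH (\<epsilon> h) h"
    by (rule collapse_gen[OF VH Th]) (auto simp: epsadd epssc VH.scale_left_distrib VH.scale_right_distrib mult.commute)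
  then have "smH (\<epsilon> h) h = smH 1 h" using cou by simp
  then have eps1: "\<epsilon> h = 1" using h0 by (metis VH.scale_cancel_right)
  have hlS: "hl smH smH S" unfolding hl_def using Sadd Ssc by simp
  have hlI: "hl smH smH (\<lambda>x. x)" unfolding hl_def by simp
  define s where "s = S h"
  have sh: "s * h = 1"
    using collapse_prod[OF AH Th hlS hlI] ant1 eps1 unfolding s_def by simp
  have hs: "h * s = 1"
    using collapse_prod[OF AH Th hlI hlS] ant2 eps1 unfolding s_def by simp
  have Ts: "tens2_eq smH (\<Delta> s) [(s,s)]" by (rule GL_inv[OF H Th sh hs])
  have ba: "bilinear_action smH smA act" and act1: "\<forall>a. act 1 a = a"
    and pmul: "\<forall>h a b. act h (a * b) = (\<Sum>(x, y)\<leftarrow>\<Delta> h. act x a * act y b)"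
    and pcomp: "\<forall>h k a. act h (act k a) = (\<Sum>(x, y)\<leftarrow>\<Delta> h. act x 1 * act (y * k) a)"
    using pa unfolding partial_action_def by auto
  have hl1: "hl smH smA (\<lambda>x. act x b)" for b using ba unfolding hl_def bilinear_action_def by simp
  have hl2: "hl smH smA (\<lambda>x. act (x * k) b)" for b k
    using ba unfolding hl_def bilinear_action_def by (simp add: distrib_right mH1[symmetric])
  have act0: "act g 0 = 0" for g
    using ba unfolding bilinear_action_def by (metis add_cancel_right_left add_0)
  have MUL: "act g (b * c) = act g b * act g c" if "tens2_eq smH (\<Delta> g) [(g,g)]" for g b c
    using pmul collapse_prod[OF A that hl1 hl1] by simp
  have COMP: "act g (act k b) = act g 1 * act (g * k) b" if "tens2_eq smH (\<Delta> g) [(g,g)]" for g k b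
    using pcomp collapse_prod[OF A that hl1 hl2] by simp
  define e where "e = act h 1"
  have ea: "e * b = act h (act s b)" for b
    using COMP[OF Th, of s b] hs act1 unfolding e_def by simp
  have i: "e * a * e = e * a"
    using ea MUL[OF Th, of "act s a" 1] unfolding e_def by simp
  have ii: "symmetric_on_span_grouplikes smH \<Delta> smA act \<longrightarrow> e * a = a * e"
  proof
    assume sym: "symmetric_on_span_grouplikes smH \<Delta> smA act"
    have hG: "h \<in> module.span smH (grouplikes smH \<Delta>)" using h by (simp add: VH.span_base)
    have "s \<noteq> 0" using sh h0 by (metis mult_zero_left mult_1_right hs)
    then have sG: "s \<in> module.span smH (grouplikes smH \<Delta>)"
      using Ts by (simp add: VH.span_base grouplikes_def)
    have "act h (act s a) = (\<Sum>(x, y)\<leftarrow>\<Delta> h. act (x * s) a * act y 1)"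
      using sym hG sG unfolding symmetric_on_span_grouplikes_def Let_def by blast
    also have "\<dots> = act (h * s) a * act h 1" by (rule collapse_prod[OF A Th hl2 hl1])
    finally show "e * a = a * e" using ea hs act1 unfolding e_def by simp
  qed
  have iii: "act h 1 = 0 \<longrightarrow> (\<forall>i::int. act (int_pow h i) 1 * act (int_pow h (i + 1)) 1 = 0)"
  proof (intro impI allI)
    fix i :: int
    assume e0: "act h 1 = 0"
    have THE: "(THE g. h * g = 1 \<and> g * h = 1) = s"
    proof (rule the_equality)
      show "h * s = 1 \<and> s * h = 1" using hs sh by simp
      fix g assume "h * g = 1 \<and> g * h = 1"
      then show "g = s" by (metis mult.assoc mult_1_left mult_1_right hs)
    qed
    have ip: "int_pow h j = (if 0 \<le> j then h ^ nat j else s ^ nat (- j))" for j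
      unfolding int_pow_def THE ..
    have GLi: "tens2_eq smH (\<Delta> (int_pow h i)) [(int_pow h i, int_pow h i)]"
      unfolding ip using GL_pow[OF H Th] GL_pow[OF H Ts] by simp
    have step: "int_pow h i * h = int_pow h (i + 1)"
    proof (cases "0 \<le> i")
      case True
      then have "nat (i + 1) = Suc (nat i)" by simp
      then show ?thesis using True unfolding ip by (simp add: power_commutes)
    next
      case False
      then obtain m where m: "nat (- i) = Suc m" by (metis gr0_implies_Suc not_le zero_less_nat_eq neg_0_less_iff_less)
      have "s ^ Suc m * h = s ^ m * (s * h)" by (simp only: power_Suc2 mult.assoc)
      then have "s ^ Suc m * h = s ^ m" by (simp add: sh)
      moreover have "int_pow h (i+1) = s ^ m"
      proof (cases "i + 1 = 0")
        case True
        then have "m = 0" using m by simp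
        then show ?thesis using True unfolding ip by simp
      next
        case False' : False
        then have "nat (- (i+1)) = m" using m by simp
        then show ?thesis using False False' unfolding ip by simp
      qed
      ultimately show ?thesis using False m unfolding ip by simp
    qed
    have "act (int_pow h i) (act h 1) = act (int_pow h i) 1 * act (int_pow h i * h) 1"
      by (rule COMP[OF GLi])
    then show "act (int_pow h i) 1 * act (int_pow h (i + 1)) 1 = 0" using e0 act0 step by simp
  qed
  show ?thesis using i ii iii unfolding e_def by blast
qed

end
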